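(* Let $I\in[0,1)$ and let $l\ge 1$ be an integer. For integers $m\ge -1$ and $n\in\{0,1,\dots,l\}$, let $Q(l,m,n)$ be the probability that the random walk started at $[m,n]^T$ (defined in the context) hits the line $\mathcal{L}_1=\{[m',n']^T : m'=-1\}$ before hitting the line $\mathcal{L}_2=\{[m',n']^T: n'=l\}$. Then $$Q(l,m,n)=\begin{cases}\sum_{i=0}^{l-n-1} a_{i,m}(1-I)^i I^{m+1+i}, & \text{if } m\ge 0,\ 0\le n<l,\\ 1, & \text{if } m=-1,\ 0\le n<l,\\ 0, & \text{if } m>0,\ n=l,\end{cases}$$ where the coefficients $a_{i,m}$ ($i\ge 0$, $m\ge 0$) are given by $$a_{i,m}=\begin{cases} 1, & i=0,\\ 1+m, & i=1,\\ C_i, & m=0,\\ C_{i+1}, & m=1,\\ C_{i+1}+\sum_{k=1}^{i-2} S_k\big(C_{i+1-k}\big)+S_{i-1}\big(1+j_{i-1}\big), & i>1 \text{ and } m>1.\end{cases}$$ Here $C_i=\frac{1}{i+1}\binom{2i}{i}=\frac{(2i)!}{(i+1)!\,i!}$ is the $i$-th Catalan number, and for $k\ge1$ and a summand $f$ (possibly depending on $j_k$), $S_k(f)$ denotes the nested sum $$S_k(f)=\sum_{j_1=3}^{m+1}\sum_{j_2=3}^{j_1+1}\cdots\sum_{j_k=3}^{j_{k-1}+1} f,$$ i.e. the sum over all integer tuples $(j_1,\dots,j_k)$ with $3\le j_1\le m+1$ and $3\le j_r\le j_{r-1}+1$ for $2\le r\le k$. (So, for instance, $S_1(C_i)=\sum_{j_1=3}^{m+1}C_i$,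 $S_2(C_{i-1})=\sum_{j_1=3}^{m+1}\sum_{j_2=3}^{j_1+1}C_{i-1}$, the last constant term is $S_{i-2}(C_3)$, and the final term is $S_{i-1}(1+j_{i-1})$.)
   Context: Fix $I\in[0,1)$. Let $\delta_1,\delta_2,\dots$ be i.i.d. random vectors in $\mathbb{Z}^2$ with $\delta_t=[-1,0]^T$ with probability $I$ and $\delta_t=[1,1]^T$ with probability $1-I$. For a starting point $[m,n]^T$ define $s_T=[m,n]^T+\sum_{t=1}^T\delta_t$ for $T\ge 0$ (so $s_0=[m,n]^T$). Let $\mathcal{L}_1=\{[m',n']^T: m'=-1\}$ and, for a positive integer $l$, $\mathcal{L}_2=\{[m',n']^T: n'=l\}$. The probability of hitting $\mathcal{L}_1$ before $\mathcal{L}_2$ is $$Q(l,m,n)=\sum_{T=0}^{\infty}\Pr\big(s_T\in\mathcal{L}_1,\ s_{T'}\notin\mathcal{L}_1\cup\mathcal{L}_2\ \forall\, T'<T\big).$$ (Interpretation: $m$ is the number of blocks by which an attacker's branch lags behind an honest branch, $n$ the number of blocks the honest branch has grown; each new block goes to the attacker with probability $I$, and the attacker wins if its branch surpasses the honest one before the honest branch has grown by $l$ blocks.) *)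

theory Defs
  imports Complex_Main
begin

text \<open>A step is encoded as a boolean: True = honest block, vector [1,1], probability 1-I;
  False = attacker block, vector [-1,0], probability I.\<close>

definition walk_pos :: "int \<Rightarrow> int \<Rightarrow> bool list \<Rightarrow> nat \<Rightarrow> int \<times> int" where
  "walk_pos m n xs k =
     (m + int (length (filter id (take k xs))) - int (length (filter Not (take k xs))),
      n + int (length (filter id (take k xs))))"

definition path_weight :: "real \<Rightarrow> bool list \<Rightarrow> real" where
  "path_weight I xs = prod_list (map (\<lambda>b. if b then 1 - I else I) xs)"

definition first_hit_L1 :: "nat \<Rightarrow> int \<Rightarrow> int \<Rightarrow> bool list \<Rightarrow> bool" where
  "first_hit_L1 l m n xs =
     (fst (walk_pos m n xs (length xs)) = -1 \<and>
      (\<forall>T'<length xs. fst (walk_pos m n xs T') \<noteq> -1 \<and> snd (walk_pos m n xs T') \<noteq> int l))"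

definition hit_prob :: "real \<Rightarrow> nat \<Rightarrow> int \<Rightarrow> int \<Rightarrow> nat \<Rightarrow> real" where
  "hit_prob I l m n T =
     (\<Sum>xs\<in>{xs :: bool list. length xs = T}. if first_hit_L1 l m n xs then path_weight I xs else 0)"

definition Q :: "real \<Rightarrow> nat \<Rightarrow> int \<Rightarrow> int \<Rightarrow> real" where
  "Q I l m n = (\<Sum>T. hit_prob I l m n T)"

definition catalan :: "nat \<Rightarrow> real" where
  "catalan i = real ((2 * i) choose i) / real (i + 1)"

definition idx_tuples :: "int \<Rightarrow> nat \<Rightarrow> int list set" where
  "idx_tuples m k = {js. length js = k \<and>
      (0 < k \<longrightarrow> 3 \<le> js ! 0 \<and> js ! 0 \<le> m + 1) \<and>
      (\<forall>r. 1 \<le> r \<and> r < k \<longrightarrow> 3 \<le> js ! r \<and> js ! r \<le> js ! (r - 1) + 1)}"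

definition nested_S :: "int \<Rightarrow> nat \<Rightarrow> (int \<Rightarrow> real) \<Rightarrow> real" where
  "nested_S m k f = (\<Sum>js\<in>idx_tuples m k. f (last js))"

definition coeff_a :: "nat \<Rightarrow> int \<Rightarrow> real" where
  "coeff_a i m =
     (if i = 0 then 1
      else if i = 1 then 1 + real_of_int m
      else if m = 0 then catalan i
      else if m = 1 then catalan (i + 1)
      else catalan (i + 1)
           + (\<Sum>k=1..i-2. nested_S m k (\<lambda>_. catalan (i + 1 - k)))
           + nested_S m (i - 1) (\<lambda>j. 1 + real_of_int j))"

end

theory Submission
  imports Defs
begin


lemma walk0[simp]: "walk_pos m n xs 0 = (m, n)"
  by (simp add: walk_pos_def)

lemma walk_Cons[simp]: "walk_pos m n (b#xs) (Suc k) =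
   walk_pos (if b then m+1 else m-1) (if b then n+1 else n) xs k"
  by (simp add: walk_pos_def)

lemma fh_Nil: "first_hit_L1 l m n [] \<longleftrightarrow> m = -1"
  by (simp add: first_hit_L1_def)

lemma fh_Cons: "first_hit_L1 l m n (b#xs) \<longleftrightarrow> (m \<noteq> -1 \<and> n \<noteq> int l) \<and>
   first_hit_L1 l (if b then m+1 else m-1) (if b then n+1 else n) xs"
proof -
  have "(\<forall>T'<Suc (length xs). P T') \<longleftrightarrow> P 0 \<and> (\<forall>t<length xs. P (Suc t))" for P
    by (metis less_Suc_eq_0_disj zero_less_Suc Suc_less_eq)
  then show ?thesis
    unfolding first_hit_L1_def by (simp; blast)
qed

lemma fin_bl: "finite {xs::bool list. length xs = T}"
  using finite_lists_length_eq[of "UNIV::bool set" T] by simp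

lemma hit0: "hit_prob I l m n 0 = (if m = -1 then 1 else 0)"
  by (simp add: hit_prob_def fh_Nil path_weight_def)

lemma hitSuc: "hit_prob I l m n (Suc T) =
   (if m \<noteq> -1 \<and> n \<noteq> int l then
     (1 - I) * hit_prob I l (m+1) (n+1) T + I * hit_prob I l (m-1) n T else 0)"
proof -
  let ?S = "{xs::bool list. length xs = T}"
  have eq: "{xs::bool list. length xs = Suc T} = Cons True ` ?S \<union> Cons False ` ?S"
    by (auto simp: length_Suc_conv image_iff)
  have disj: "Cons True ` ?S \<inter> Cons False ` ?S = {}" by auto
  let ?g = "\<lambda>xs. if first_hit_L1 l m n xs then path_weight I xs else 0"
  have "hit_prob I l m n (Suc T) = sum ?g (Cons True ` ?S) + sum ?g (Cons False ` ?S)"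
    unfolding hit_prob_def eq by (rule sum.union_disjoint) (use fin_bl disj in auto)
  also have "\<dots> = sum (?g \<circ> Cons True) ?S + sum (?g \<circ> Cons False) ?S"
    by (simp add: sum.reindex)
  also have "\<dots> = (if m \<noteq> -1 \<and> n \<noteq> int l then
     (1 - I) * hit_prob I l (m+1) (n+1) T + I * hit_prob I l (m-1) n T else 0)"
    by (simp add: hit_prob_def fh_Cons path_weight_def sum_distrib_left if_distrib cong: if_cong)
  finally show ?thesis .
qed


fun D :: "nat \<Rightarrow> nat \<Rightarrow> real" where
  "D n 0 = 1"
| "D n (Suc i) = real (n choose Suc i) - real (n choose i)"

lemma D_pascal: "D (Suc n) (Suc i) = D n (Suc i) + D n i"
  by (cases i) (simp_all add: binomial_Suc_Suc)

definition B :: "nat \<Rightarrow> nat \<Rightarrow> real" where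
  "B i k = D (k + 2*i) i"

lemma B0[simp]: "B 0 k = 1" by (simp add: B_def)

lemma B1: "B 1 k = real k + 1" by (simp add: B_def)

lemma B_rec: "B (Suc i) (Suc k) = B (Suc i) k + B i (Suc (Suc k))"
proof -
  have "B (Suc i) (Suc k) = D (Suc (k + 2*i + 2)) (Suc i)" by (simp add: B_def)
  also have "\<dots> = D (k + 2*i+2) (Suc i) + D (k+2*i+2) i" by (rule D_pascal)
  finally show ?thesis by (simp add: B_def)
qed

lemma B_cat0: "B i 0 = catalan i"
proof (cases i)
  case 0 then show ?thesis by (simp add: catalan_def B_def)
next
  case (Suc j)
  have a: "(2*j+2 - j) * (2*j+2 choose j) = (2*j+2) * ((2*j+2 - 1) choose j)"
    by (rule binomial_absorb_comp)
  have b: "Suc j * (2*j+2 choose Suc j) = (2*j+2) * ((2*j+2 - 1) choose j)"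
    by (rule binomial_absorption)
  have c: "real (j+2) * real (2*j+2 choose j) = real (j+1) * real (2*j+2 choose Suc j)"
  proof -
    have "(j+2) * (2*j+2 choose j) = (j+1) * (2*j+2 choose Suc j)"
      using a b by (simp add: numeral_2_eq_2)
    then show ?thesis by (metis of_nat_mult)
  qed
  have "catalan i = real (2*j+2 choose Suc j) / real (j+2)"
    by (simp add: catalan_def Suc numeral_2_eq_2)
  moreover have "B i 0 = real (2*j+2 choose Suc j) - real (2*j+2 choose j)"
    by (simp add: B_def Suc numeral_2_eq_2)
  moreover have "\<And>x M N::real. x = M / real (j+2) \<Longrightarrow> real (j+2) * N = real (j+1) * M \<Longrightarrow> M - N = x"
  proof -
    fix x M N :: real
    assume h1: "x = M / real (j+2)" and h2: "real (j+2) * N = real (j+1) * M"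
    have p: "real (j+2) > 0" by simp
    from h1 p have "x * real (j+2) = M" by simp
    with h2 have "(M - N - x) * real (j+2) = 0" by (simp add: algebra_simps)
    with p show "M - N = x" by simp
  qed
  ultimately show ?thesis using c by metis
qed

lemma B_shift: "B (Suc i) 0 = B i 1"
proof -
  have "B (Suc i) 0 = D (Suc (2*i+1)) (Suc i)" by (simp add: B_def)
  also have "\<dots> = D (2*i+1) (Suc i) + D (2*i+1) i" by (rule D_pascal)
  also have "D (2*i+1) (Suc i) = 0"
    using binomial_symmetric[of i "2*i+1"] by simp
  finally show ?thesis by (simp add: B_def)
qed

lemma B_cat1: "B i 1 = catalan (Suc i)"
  using B_shift B_cat0 by metis


lemma idx0: "idx_tuples m 0 = {[]}"
  by (auto simp: idx_tuples_def)

lemma idx_Cons: "(j#t) \<in> idx_tuples m (Suc k) \<longleftrightarrow> 3 \<le> j \<and> j \<le> m+1 \<and> t \<in> idx_tuples j k"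
proof
  assume h: "(j#t) \<in> idx_tuples m (Suc k)"
  hence len: "length t = k" and j: "3 \<le> j" "j \<le> m+1"
    and R: "\<And>r. 1 \<le> r \<Longrightarrow> r < Suc k \<Longrightarrow> 3 \<le> (j#t) ! r \<and> (j#t) ! r \<le> (j#t) ! (r - 1) + 1"
    by (auto simp: idx_tuples_def)
  have "0 < k \<longrightarrow> 3 \<le> t ! 0 \<and> t ! 0 \<le> j + 1"
    using R[of 1] by simp
  moreover have "\<forall>r. 1 \<le> r \<and> r < k \<longrightarrow> 3 \<le> t ! r \<and> t ! r \<le> t ! (r - 1) + 1"
  proof (intro allI impI)
    fix r assume "1 \<le> r \<and> r < k"
    then obtain r' where r: "r = Suc r'" "Suc r' < k" by (cases r) auto
    show "3 \<le> t ! r \<and> t ! r \<le> t ! (r - 1) + 1"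
      using R[of "Suc r"] r by simp
  qed
  ultimately show "3 \<le> j \<and> j \<le> m+1 \<and> t \<in> idx_tuples j k"
    using len j by (auto simp: idx_tuples_def)
next
  assume h: "3 \<le> j \<and> j \<le> m+1 \<and> t \<in> idx_tuples j k"
  hence len: "length t = k" and j: "3 \<le> j" "j \<le> m+1"
    and R0: "0 < k \<Longrightarrow> 3 \<le> t ! 0 \<and> t ! 0 \<le> j + 1"
    and R: "\<And>r. 1 \<le> r \<Longrightarrow> r < k \<Longrightarrow> 3 \<le> t ! r \<and> t ! r \<le> t ! (r - 1) + 1"
    by (auto simp: idx_tuples_def)
  have "\<forall>r. 1 \<le> r \<and> r < Suc k \<longrightarrow> 3 \<le> (j#t) ! r \<and> (j#t) ! r \<le> (j#t) ! (r - 1) + 1"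
  proof (intro allI impI)
    fix r assume a: "1 \<le> r \<and> r < Suc k"
    then obtain r' where r: "r = Suc r'" "r' < k" by (cases r) auto
    show "3 \<le> (j#t) ! r \<and> (j#t) ! r \<le> (j#t) ! (r - 1) + 1"
    proof (cases r')
      case 0 then show ?thesis using R0 r by simp
    next
      case (Suc r'') then show ?thesis using R[of r'] r by simp
    qed
  qed
  then show "(j#t) \<in> idx_tuples m (Suc k)"
    using len j by (auto simp: idx_tuples_def)
qed

lemma idx_Suc: "idx_tuples m (Suc k) = (\<lambda>p. fst p # snd p) ` (SIGMA j:{3..m+1}. idx_tuples j k)"
proof (rule set_eqI)
  fix js
  show "js \<in> idx_tuples m (Suc k) \<longleftrightarrow> js \<in> (\<lambda>p. fst p # snd p) ` (SIGMA j:{3..m+1}. idx_tuples j k)"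
  proof (cases js)
    case Nil then show ?thesis by (auto simp: idx_tuples_def)
  next
    case (Cons j t) then show ?thesis using idx_Cons[of j t m k] by (auto simp: image_iff)
  qed
qed

lemma idx_fin: "finite (idx_tuples m k)"
proof (induction k arbitrary: m)
  case 0 then show ?case by (simp add: idx0)
next
  case (Suc k) then show ?case by (simp add: idx_Suc)
qed

lemma nS_Suc_gen: "nested_S m (Suc k) f = (\<Sum>j\<in>{3..m+1}. \<Sum>t\<in>idx_tuples j k. f (last (j#t)))"
proof -
  have inj: "inj_on (\<lambda>p. fst p # snd p) X" for X :: "(int \<times> int list) set"
    by (auto simp: inj_on_def prod_eq_iff)
  have "nested_S m (Suc k) f = (\<Sum>p\<in>(SIGMA j:{3..m+1}. idx_tuples j k). f (last (fst p # snd p)))"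
    unfolding nested_S_def idx_Suc by (subst sum.reindex[OF inj]) (simp add: o_def)
  also have "\<dots> = (\<Sum>j\<in>{3..m+1}. \<Sum>t\<in>idx_tuples j k. f (last (j#t)))"
  proof -
    have "(\<Sum>j\<in>{3..m+1}. \<Sum>t\<in>idx_tuples j k. f (last (j#t))) = (\<Sum>(j,t)\<in>(SIGMA j:{3..m+1}. idx_tuples j k). f (last (j#t)))"
      by (rule sum.Sigma) (auto simp: idx_fin)
    then show ?thesis by (simp add: split_def)
  qed
  finally show ?thesis .
qed

lemma nS_1: "nested_S m (Suc 0) f = (\<Sum>j\<in>{3..m+1}. f j)"
  using nS_Suc_gen[of m 0 f] by (simp add: idx0)

lemma nS_SS: "nested_S m (Suc (Suc k)) f = (\<Sum>j\<in>{3..m+1}. nested_S j (Suc k) f)"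
proof -
  have "t \<in> idx_tuples j (Suc k) \<Longrightarrow> last (j#t) = last t" for j t
    by (auto simp: idx_tuples_def)
  then show ?thesis unfolding nS_Suc_gen[of m "Suc k"]
    by (intro sum.cong refl) (simp add: nested_S_def)
qed

lemma nS_small: "m \<le> 1 \<Longrightarrow> nested_S m (Suc k) f = 0"
  by (simp add: nS_Suc_gen)

lemma sum_top: "2 \<le> (m::int) \<Longrightarrow> (\<Sum>j\<in>{3..m+1}. g j) = (\<Sum>j\<in>{3..m-1+1}. g j) + g (m+1)"
proof -
  assume "2 \<le> m"
  hence "{3..1+m} = insert (1+m) {3..m}" by (intro atLeastAtMostPlus1_int_conv) simp
  then show ?thesis by (simp add: add.commute)
qed

lemma nS_diff1: "2 \<le> m \<Longrightarrow> nested_S m (Suc 0) f = nested_S (m-1) (Suc 0) f + f (m+1)"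
  by (simp add: nS_1 sum_top)

lemma nS_diff: "2 \<le> m \<Longrightarrow> nested_S m (Suc (Suc k)) f = nested_S (m-1) (Suc (Suc k)) f + nested_S (m+1) (Suc k) f"
  by (simp add: nS_SS sum_top[where g="\<lambda>j. nested_S j (Suc k) f"])


definition gen :: "nat \<Rightarrow> int \<Rightarrow> real" where
  "gen i m = catalan (i + 1) + (\<Sum>k=1..i-2. nested_S m k (\<lambda>_. catalan (i + 1 - k)))
           + nested_S m (i - 1) (\<lambda>j. 1 + real_of_int j)"

lemma coeff_gen: "2 \<le> i \<Longrightarrow> 1 \<le> m \<Longrightarrow> coeff_a i m = gen i m"
proof -
  assume i: "2 \<le> i" and m: "1 \<le> m"
  show ?thesis
  proof (cases "m = 1")
    case True
    have "(\<Sum>k=1..i-2. nested_S m k (\<lambda>_. catalan (i + 1 - k))) = 0"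
    proof (intro sum.neutral ballI)
      fix k assume "k \<in> {1..i-2}"
      then obtain k' where "k = Suc k'" by (cases k) auto
      then show "nested_S m k (\<lambda>_. catalan (i + 1 - k)) = 0" using True nS_small by simp
    qed
    moreover have "nested_S m (i - 1) (\<lambda>j. 1 + real_of_int j) = 0"
      using True nS_small[of m "i-2"] i by (simp add: Suc_diff_Suc numeral_2_eq_2)
    ultimately show ?thesis using True i by (simp add: coeff_a_def gen_def)
  next
    case False
    then show ?thesis using i m by (simp add: coeff_a_def gen_def)
  qed
qed

lemma key2: "2 \<le> m \<Longrightarrow> coeff_a 2 m = coeff_a 2 (m-1) + coeff_a 1 (m+1)"
proof -
  assume m: "2 \<le> m"
  have "coeff_a 2 m = gen 2 m" "coeff_a 2 (m-1) = gen 2 (m-1)"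
    using m by (auto intro: coeff_gen)
  moreover have "gen 2 m = gen 2 (m-1) + (2 + real_of_int m)"
    using nS_diff1[OF m, of "\<lambda>j. 1 + real_of_int j"] by (simp add: gen_def)
  ultimately show ?thesis by (simp add: coeff_a_def)
qed

lemma key3: "2 \<le> m \<Longrightarrow> coeff_a (Suc (Suc (Suc p))) m
   = coeff_a (Suc (Suc (Suc p))) (m-1) + coeff_a (Suc (Suc p)) (m+1)"
proof -
  assume m: "2 \<le> m"
  define i where "i = Suc (Suc (Suc p))"
  have e1: "coeff_a i m = gen i m" "coeff_a i (m-1) = gen i (m-1)" "coeff_a (Suc (Suc p)) (m+1) = gen (Suc (Suc p)) (m+1)"
    using m by (auto intro: coeff_gen simp: i_def)
  let ?g = "\<lambda>j. 1 + real_of_int j"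
  have s: "(\<Sum>k=1..i-2. nested_S M k (\<lambda>_. catalan (i + 1 - k))) =
     nested_S M (Suc 0) (\<lambda>_. catalan i) + (\<Sum>k<p. nested_S M (Suc (Suc k)) (\<lambda>_. catalan (p + 2 - k)))" for M
  proof -
    have "(\<Sum>k=1..i-2. nested_S M k (\<lambda>_. catalan (i + 1 - k))) = (\<Sum>k<Suc p. nested_S M (Suc k) (\<lambda>_. catalan (i - k)))"
      by (simp add: i_def sum.atLeast1_atMost_eq)
    also have "\<dots> = nested_S M (Suc 0) (\<lambda>_. catalan i) + (\<Sum>k<p. nested_S M (Suc (Suc k)) (\<lambda>_. catalan (i - Suc k)))"
      by (simp only: sum.lessThan_Suc_shift) simp
    also have "(\<Sum>k<p. nested_S M (Suc (Suc k)) (\<lambda>_. catalan (i - Suc k))) = (\<Sum>k<p. nested_S M (Suc (Suc k)) (\<lambda>_. catalan (p + 2 - k)))"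
      by (intro sum.cong refl) (simp add: i_def)
    finally show ?thesis .
  qed
  have s2: "(\<Sum>k=1..Suc (Suc p)-2. nested_S M k (\<lambda>_. catalan (Suc (Suc p) + 1 - k))) =
     (\<Sum>k<p. nested_S M (Suc k) (\<lambda>_. catalan (p + 2 - k)))" for M
    by (simp add: sum.atLeast1_atMost_eq numeral_2_eq_2)
  have "gen i m = gen i (m-1) + gen (Suc (Suc p)) (m+1)"
  proof -
    have A: "gen i m = catalan (i+1) + nested_S m (Suc 0) (\<lambda>_. catalan i) + (\<Sum>k<p. nested_S m (Suc (Suc k)) (\<lambda>_. catalan (p + 2 - k)))
              + nested_S m (Suc (Suc p)) ?g"
      unfolding gen_def s by (simp add: i_def)
    have B: "gen i (m-1) = catalan (i+1) + nested_S (m-1) (Suc 0) (\<lambda>_. catalan i) + (\<Sum>k<p. nested_S (m-1) (Suc (Suc k)) (\<lambda>_. catalan (p + 2 - k)))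
              + nested_S (m-1) (Suc (Suc p)) ?g"
      unfolding gen_def s by (simp add: i_def)
    have C: "gen (Suc (Suc p)) (m+1) = catalan i + (\<Sum>k<p. nested_S (m+1) (Suc k) (\<lambda>_. catalan (p + 2 - k)))
              + nested_S (m+1) (Suc p) ?g"
      unfolding gen_def s2 by (simp add: i_def)
    have D: "(\<Sum>k<p. nested_S m (Suc (Suc k)) (\<lambda>_. catalan (p + 2 - k))) =
       (\<Sum>k<p. nested_S (m-1) (Suc (Suc k)) (\<lambda>_. catalan (p + 2 - k))) + (\<Sum>k<p. nested_S (m+1) (Suc k) (\<lambda>_. catalan (p + 2 - k)))"
      unfolding nS_diff[OF m] by (simp only: sum.distrib)
    show ?thesis unfolding A B C D nS_diff1[OF m] by (simp add: nS_diff[OF m] sum.distrib)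
  qed
  then show ?thesis using e1 by (simp add: i_def)
qed

lemma coeff_B: "coeff_a i (int k) = B i k"
proof (induction i arbitrary: k rule: less_induct)
  case (less i)
  note outerIH = less.IH
  show ?case
  proof (cases "i \<le> 1")
    case True
    then consider "i = 0" | "i = 1" by linarith
    then show ?thesis by cases (simp_all add: coeff_a_def B_def)
  next
    case False
    then obtain p where ip: "i = Suc (Suc p)" by (metis Suc_le_D not_less_eq_eq One_nat_def le_SucE nat.exhaust le0 Suc_n_not_le_n)
    show ?thesis
    proof (induction k rule: less_induct)
      case (less k)
      show ?case
      proof (cases "k \<le> 1")
        case True
        then consider "k = 0" | "k = 1" by linarith
        then show ?thesis
          by cases (simp_all add: coeff_a_def ip B_cat0 B_cat1[simplified] )
      next
        case False
        then obtain k' where kk: "k = Suc (Suc k')" by (metis Suc_le_D not_less_eq_eq One_nat_def le_SucE nat.exhaust le0 Suc_n_not_le_n)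
        have m2: "2 \<le> int k" using kk by simp
        have rec: "coeff_a i (int k) = coeff_a i (int k - 1) + coeff_a (Suc p) (int k + 1)"
        proof (cases p)
          case 0 then show ?thesis using key2[OF m2] ip by (simp add: numeral_2_eq_2)
        next
          case (Suc q) then show ?thesis using key3[OF m2, of q] ip by simp
        qed
        have "coeff_a i (int k - 1) = B i (Suc k')"
          using less.IH[of "Suc k'"] kk by (simp add: of_nat_diff)
        moreover have "coeff_a (Suc p) (int k + 1) = B (Suc p) (Suc (Suc (Suc k')))"
          using outerIH[of "Suc p" "Suc (Suc (Suc k'))"] ip kk by simp
        ultimately show ?thesis using rec B_rec[of "Suc p" "Suc k'"] ip kk by simp
      qed
    qed
  qed
qed


lemma vanish: "\<forall>m n. -1 \<le> m \<longrightarrow> n \<le> l \<longrightarrow> nat (m+1) + 2*(l-n) < T \<longrightarrow> hit_prob I l m (int n) T = 0"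
proof (induction T)
  case 0 then show ?case by simp
next
  case (Suc T)
  show ?case
  proof (intro allI impI)
    fix m :: int and n :: nat
    assume h: "-1 \<le> m" "n \<le> l" "nat (m+1) + 2*(l-n) < Suc T"
    show "hit_prob I l m (int n) (Suc T) = 0"
    proof (cases "m \<noteq> -1 \<and> int n \<noteq> int l")
      case True
      hence nl: "n < l" and m0: "0 \<le> m" using h by auto
      have "hit_prob I l (m+1) (int n + 1) T = 0"
        using Suc.IH[rule_format, of "m+1" "Suc n"] h nl m0 by (simp add: add.commute)
      moreover have "hit_prob I l (m-1) (int n) T = 0"
        using Suc.IH[rule_format, of "m-1" n] h nl m0 by simp
      ultimately show ?thesis using True by (simp add: hitSuc)
    next
      case False then show ?thesis by (auto simp: hitSuc)
    qed
  qed
qed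

lemma Qfin: "-1 \<le> m \<Longrightarrow> n \<le> l \<Longrightarrow> nat (m+1) + 2*(l-n) < N \<Longrightarrow>
   Q I l m (int n) = (\<Sum>T<N. hit_prob I l m (int n) T)"
  unfolding Q_def
  by (rule suminf_finite) (use vanish in auto)

lemma Qm1: "Q I l (-1) n = 1"
proof -
  have "Q I l (-1) n = (\<Sum>T\<in>{0}. hit_prob I l (-1) n T)"
    unfolding Q_def
  proof (rule suminf_finite)
    fix T :: nat assume "T \<notin> {0}"
    then obtain T' where "T = Suc T'" by (cases T) auto
    then show "hit_prob I l (-1) n T = 0" by (simp add: hitSuc)
  qed simp
  then show ?thesis by (simp add: hit0)
qed

lemma Qrec: "0 \<le> m \<Longrightarrow> n < l \<Longrightarrow>
   Q I l m (int n) = (1 - I) * Q I l (m+1) (int (Suc n)) + I * Q I l (m-1) (int n)"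
proof -
  assume m: "0 \<le> m" and n: "n < l"
  define N where "N = nat (m+1) + 2*(l-n) + 2"
  have "Q I l m (int n) = (\<Sum>T<Suc N. hit_prob I l m (int n) T)"
    using m n by (intro Qfin) (auto simp: N_def)
  also have "\<dots> = (\<Sum>T<N. hit_prob I l m (int n) (Suc T))"
    using m by (simp add: sum.lessThan_Suc_shift hit0 del: sum.lessThan_Suc)
  also have "\<dots> = (\<Sum>T<N. (1 - I) * hit_prob I l (m+1) (int (Suc n)) T + I * hit_prob I l (m-1) (int n) T)"
    using m n by (intro sum.cong refl) (simp add: hitSuc add.commute)
  also have "\<dots> = (1 - I) * (\<Sum>T<N. hit_prob I l (m+1) (int (Suc n)) T) + I * (\<Sum>T<N. hit_prob I l (m-1) (int n) T)"
    by (simp add: sum.distrib sum_distrib_left)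
  also have "(\<Sum>T<N. hit_prob I l (m+1) (int (Suc n)) T) = Q I l (m+1) (int (Suc n))"
    using m n by (intro Qfin[symmetric]) (auto simp: N_def)
  also have "(\<Sum>T<N. hit_prob I l (m-1) (int n) T) = Q I l (m-1) (int n)"
    using m n by (intro Qfin[symmetric]) (auto simp: N_def)
  finally show ?thesis .
qed

definition F :: "real \<Rightarrow> nat \<Rightarrow> nat \<Rightarrow> real" where
  "F I L k = (\<Sum>i<L. B i k * (1 - I) ^ i * I ^ (k + 1 + i))"

lemma F0: "F I 0 k = 0" by (simp add: F_def)

lemma F_rec0: "F I (Suc L) 0 = (1 - I) * F I L 1 + I"
proof -
  have "F I (Suc L) 0 = I + (\<Sum>i<L. B (Suc i) 0 * (1 - I) ^ Suc i * I ^ (Suc i + 1))"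
    unfolding F_def by (simp only: sum.lessThan_Suc_shift) (simp add: numeral_eq_Suc)
  also have "(\<Sum>i<L. B (Suc i) 0 * (1 - I) ^ Suc i * I ^ (Suc i + 1)) = (1 - I) * F I L 1"
    unfolding F_def sum_distrib_left B_shift by (intro sum.cong refl) (simp add: algebra_simps numeral_eq_Suc)
  finally show ?thesis by simp
qed

lemma F_rec: "F I (Suc L) (Suc k) = (1 - I) * F I L (Suc (Suc k)) + I * F I (Suc L) k"
proof -
  have "F I (Suc L) (Suc k) = I ^ (k+2) + (\<Sum>i<L. B (Suc i) (Suc k) * (1 - I) ^ Suc i * I ^ (k + 3 + i))"
    unfolding F_def by (simp only: sum.lessThan_Suc_shift) (simp add: numeral_eq_Suc)
  also have "\<dots> = I ^ (k+2) + (\<Sum>i<L. B (Suc i) k * (1 - I) ^ Suc i * I ^ (k + 3 + i))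
       + (\<Sum>i<L. B i (Suc (Suc k)) * (1 - I) ^ Suc i * I ^ (k + 3 + i))"
    unfolding B_rec by (simp only: distrib_right sum.distrib add.assoc)
  also have "(\<Sum>i<L. B i (Suc (Suc k)) * (1 - I) ^ Suc i * I ^ (k + 3 + i)) = (1 - I) * F I L (Suc (Suc k))"
    unfolding F_def sum_distrib_left by (intro sum.cong refl) (simp add: algebra_simps numeral_eq_Suc)
  also have "I ^ (k+2) + (\<Sum>i<L. B (Suc i) k * (1 - I) ^ Suc i * I ^ (k + 3 + i)) = I * F I (Suc L) k"
  proof -
    have "F I (Suc L) k = I ^ (k+1) + (\<Sum>i<L. B (Suc i) k * (1 - I) ^ Suc i * I ^ (k + 2 + i))"
      unfolding F_def by (simp only: sum.lessThan_Suc_shift) (simp add: numeral_eq_Suc)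
    then show ?thesis by (simp add: sum_distrib_left algebra_simps numeral_eq_Suc)
  qed
  finally show ?thesis by simp
qed

lemma mainQ: "\<forall>m n. nat (m+1) + 2*(l-n) = M \<longrightarrow> -1 \<le> m \<longrightarrow> n \<le> l \<longrightarrow>
    Q I l m (int n) = (if m = -1 then 1 else F I (l-n) (nat m))"
proof (induction M rule: less_induct)
  case (less M)
  show ?case
  proof (intro allI impI)
    fix m :: int and n :: nat
    assume hM: "nat (m+1) + 2*(l-n) = M" and hm: "-1 \<le> m" and hn: "n \<le> l"
    show "Q I l m (int n) = (if m = -1 then 1 else F I (l-n) (nat m))"
    proof (cases "m = -1")
      case True then show ?thesis by (simp add: Qm1)
    next
      case False
      hence m0: "0 \<le> m" using hm by simp
      show ?thesis
      proof (cases "n = l")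
        case True
        have "Q I l m (int n) = (\<Sum>T<Suc (nat (m+1)). hit_prob I l m (int n) T)"
          using m0 True by (intro Qfin) auto
        also have "\<dots> = 0"
          using False True by (intro sum.neutral ballI) (metis hit0 hitSuc not0_implies_Suc)
        finally show ?thesis using False True by (simp add: F0)
      next
        case nl: False
        hence nl: "n < l" using hn by simp
        obtain L where L: "l - n = Suc L" using nl by (metis Suc_diff_Suc)
        have lm1: "l - Suc n = L" using L by simp
        have IH1: "Q I l (m+1) (int (Suc n)) = F I L (Suc (nat m))"
          using less.IH[of "nat (m+2) + 2*(l - Suc n)", rule_format, of "m+1" "Suc n"] hM m0 nl L lm1
          by (simp add: nat_add_distrib)
        have IH2: "Q I l (m-1) (int n) = (if m = 0 then 1 else F I (Suc L) (nat m - 1))"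
          using less.IH[of "nat m + 2*(l - n)", rule_format, of "m-1" n] hM m0 nl L
          by (simp add: nat_diff_distrib)
        show ?thesis
        proof (cases "m = 0")
          case True
          then show ?thesis using Qrec[OF m0 nl] IH1 IH2 L by (simp add: F_rec0)
        next
          case m1: False
          then obtain k where k: "nat m = Suc k" using m0 by (metis gr0_implies_Suc nat_0_iff not_le zero_less_nat_eq antisym_conv1)
          then show ?thesis using Qrec[OF m0 nl] IH1 IH2 L m1 False by (simp add: F_rec)
        qed
      qed
    qed
  qed
qed

theorem theorem1:
  fixes I :: real and l :: nat and m :: int and n :: nat
  assumes "0 \<le> I" and "I < 1" and "1 \<le> l" and "-1 \<le> m" and "n \<le> l"
  shows "(0 \<le> m \<and> n < l \<longrightarrow>
            Q I l m (int n) = (\<Sum>i<l - n. coeff_a i m * (1 - I) ^ i * I ^ (nat (m + 1) + i)))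
       \<and> (m = -1 \<and> n < l \<longrightarrow> Q I l m (int n) = 1)
       \<and> (0 < m \<and> n = l \<longrightarrow> Q I l m (int n) = 0)"
proof -
  have M: "Q I l m (int n) = (if m = -1 then 1 else F I (l-n) (nat m))"
    using mainQ[where l=l and I=I and M="nat (m+1) + 2*(l-n)"] assms by blast
  have "0 \<le> m \<Longrightarrow> (\<Sum>i<l - n. coeff_a i m * (1 - I) ^ i * I ^ (nat (m + 1) + i)) = F I (l-n) (nat m)"
  proof -
    assume m0: "0 \<le> m"
    have "coeff_a i m = B i (nat m)" for i using coeff_B[of i "nat m"] m0 by simp
    moreover have "nat (m+1) = nat m + 1" using m0 by simp
    ultimately show ?thesis by (simp add: F_def)
  qed
  then show ?thesis using M by (auto simp: F0)
qed

end
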